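(* Let $k$ be a positive integer, $a=6k+5$, $b=2a-6$, $c=2a-4$, $S=\{a,b,c\}$, $G=\langle S\rangle$. For $i\in[0,4k+2]$ let $I_{i,k}=[ia-6\lfloor i/2\rfloor,\,ia-4]_2\cup\{ia\}$, and let $H_{14,k}=\bigcup_{i=0}^{4k+2}I_{i,k}\cup[(4k+1)a+3,\infty[$. Then: (1) $x\in G$ if and only if $x=(s+2q)a-6q+2r$ for some $q,r,s\in\mathbb{N}$ with $0\le r\le q$; (2) $I_{i,k}<I_{i+2,k}$ for $i\in[0,4k]$; $I_{i,k}<I_{i+1,k}$ for $i\in[0,2k]$; and for every $i\in[2k+1,4k+1]$, $I_{i+1,k}\cap[(i-1)a+1,\,ia]=[ia-6i_k-1,\,ia-1]_2$, where $i_k=\lfloor (i-1-2k)/2\rfloor$; (3) $G=H_{14,k}$; (4) $H_{14,k}$ is a $3$-permutation numerical semigroup.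
   Context: $\mathbb{N}=\{0,1,2,\dots\}$. A numerical semigroup is a submonoid $G$ of $(\mathbb{N},+,0)$ with $\mathbb{N}\setminus G$ finite; $\langle S\rangle$ is the submonoid generated by $S$. Writing the elements of a numerical semigroup as $0=g_0<g_1<g_2<\cdots$, it is an $n$-permutation numerical semigroup if it is generated by $\{g_1,\dots,g_n\}$ and for every $k\in\mathbb{N}$ the tuple $(g_{kn+1}\bmod n,\dots,g_{kn+n}\bmod n)$ contains exactly one representative of each residue class mod $n$. Notation: $[u,v]=\{x\in\mathbb{N}:u\le x\le v\}$ and $[u,v]_2=\{x\in[u,v]:x\equiv u\pmod 2\}$ (both empty if $u>v$); $[u,\infty[=\{x\in\mathbb{N}:x\ge u\}$; for nonempty $X,Y$, $X<Y$ means $x<y$ for all $x\in X,y\in Y$. *)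

theory Defs
  imports Main "HOL-Library.Infinite_Set"
begin

inductive_set gen :: "nat set \<Rightarrow> nat set" for S :: "nat set" where
  gen_zero: "0 \<in> gen S"
| gen_elem: "s \<in> S \<Longrightarrow> s \<in> gen S"
| gen_add: "x \<in> gen S \<Longrightarrow> y \<in> gen S \<Longrightarrow> x + y \<in> gen S"

definition numerical_semigroup :: "nat set \<Rightarrow> bool" where
  "numerical_semigroup G \<longleftrightarrow> 0 \<in> G \<and> (\<forall>x\<in>G. \<forall>y\<in>G. x + y \<in> G) \<and> finite (UNIV - G)"

text \<open>g_j = enumerate G j is the j-th smallest element (g_0 = 0).\<close>
definition perm_numerical_semigroup :: "nat \<Rightarrow> nat set \<Rightarrow> bool" where
  "perm_numerical_semigroup n G \<longleftrightarrow>
     numerical_semigroup G \<and>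
     G = gen (enumerate G ` {1..n}) \<and>
     (\<forall>m. bij_betw (\<lambda>j. enumerate G (m * n + j) mod n) {1..n} {0..<n})"

definition ivl :: "int \<Rightarrow> int \<Rightarrow> nat set" where
  "ivl u v = {x. u \<le> int x \<and> int x \<le> v}"

definition ivl2 :: "int \<Rightarrow> int \<Rightarrow> nat set" where
  "ivl2 u v = {x. u \<le> int x \<and> int x \<le> v \<and> int x mod 2 = u mod 2}"

definition set_less :: "nat set \<Rightarrow> nat set \<Rightarrow> bool" where
  "set_less X Y \<longleftrightarrow> (\<forall>x\<in>X. \<forall>y\<in>Y. x < y)"

definition aa :: "nat \<Rightarrow> nat" where "aa k = 6 * k + 5"

definition Gk :: "nat \<Rightarrow> nat set" where
  "Gk k = gen {aa k, 2 * aa k - 6, 2 * aa k - 4}"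

definition Iik :: "nat \<Rightarrow> nat \<Rightarrow> nat set" where
  "Iik i k = ivl2 (int (i * aa k) - 6 * int (i div 2)) (int (i * aa k) - 4) \<union> {i * aa k}"

definition H14 :: "nat \<Rightarrow> nat set" where
  "H14 k = (\<Union>i\<in>{0..4*k+2}. Iik i k) \<union> {x. (4*k+1) * aa k + 3 \<le> x}"

end

theory Submission
  imports Defs "HOL-Library.Infinite_Set"
begin

lemma dm2: "(x::int) = 2*(x div 2) + x mod 2 \<and> 0 \<le> x mod 2 \<and> x mod 2 \<le> 1" by simp
lemma dm3: "(x::int) = 3*(x div 3) + x mod 3 \<and> 0 \<le> x mod 3 \<and> x mod 3 \<le> 2" by simp

definition MemI :: "int \<Rightarrow> int \<Rightarrow> int \<Rightarrow> bool" where
"MemI K q r \<longleftrightarrow> r = 0 \<or>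
 (1 \<le> q \<and> q \<le> 2*K \<and> r mod 2 = 1 \<and> 6*K+5 \<le> r + 6*((q+1) div 2) \<and> r + 4 \<le> 6*K+5) \<or>
 (q = 2*K \<and> r = 6*K+4) \<or>
 (2*K+1 \<le> q \<and> q \<le> 4*K \<and> r mod 2 = 1 \<and> 0 < r \<and> r + 4 \<le> 6*K+5) \<or>
 (2*K+1 \<le> q \<and> q \<le> 4*K \<and> r mod 2 = 0 \<and> 6*K+5 \<le> r + 6*((q - 2*K) div 2) + 1 \<and> r < 6*K+5) \<or>
 (q = 4*K+1 \<and> 0 < r \<and> (r mod 2 = 1 \<or> 3 \<le> r)) \<or> (4*K+2 \<le> q \<and> 0 \<le> r)"

definition nxQ :: "int \<Rightarrow> int \<Rightarrow> int \<Rightarrow> int" where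
"nxQ K Q R =
 (if Q = 0 then 1
  else if R = 0 then Q
  else if Q \<le> 2*K then (if R + 4 < 6*K+5 then Q else if R + 4 = 6*K+5 \<and> Q = 2*K then Q else Q+1)
  else if Q \<le> 4*K then (if R < 6*K+3 - 6*((Q-2*K) div 2) then Q
                        else (if R + 1 = 6*K+5 then Q+1 else Q))
  else if R + 1 = 6*K+5 then Q+1 else Q)"

definition nxR :: "int \<Rightarrow> int \<Rightarrow> int \<Rightarrow> int" where
"nxR K Q R =
 (if Q = 0 then 0
  else if R = 0 then (if Q \<le> 2*K then 6*K+5 - 6*((Q+1) div 2) else 1)
  else if Q \<le> 2*K then (if R + 4 < 6*K+5 then R+2 else if R + 4 = 6*K+5 \<and> Q = 2*K then 6*K+4 else 0)
  else if Q \<le> 4*K then (if R < 6*K+3 - 6*((Q-2*K) div 2) then (if R + 4 = 6*K+5 then 6*K+4 else R+2)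
                        else (if R + 3 = 6*K+5 then 6*K+4 else if R + 1 = 6*K+5 then 0 else R+1))
  else if Q = 4*K+1 \<and> R = 1 then 3
  else if R + 1 = 6*K+5 then 0 else R+1)"

definition sigI :: "int \<Rightarrow> int \<Rightarrow> int \<Rightarrow> int" where
"sigI K Q R =
 (if Q = 0 then 0
  else if R = 0 then (if Q \<le> 2*K then 1 else if Q \<le> 4*K+1 then 2 else (2*Q + K + 2) mod 3)
  else if Q \<le> 2*K then (if R + 1 = 6*K+5 then 1 else (6*K+5 - R + 2) mod 3)
  else if Q \<le> 4*K then (if R + 1 = 6*K+5 then 1 else if R \<ge> 6*K+3 - 6*((Q-2*K) div 2) then (R + 1) mod 3 else (2*R+1) mod 3)
  else if Q = 4*K+1 \<and> R = 1 then 0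
  else (2*Q + K + 2 + R) mod 3)"

lemma NX1: "1 \<le> K \<Longrightarrow> 0 \<le> Q \<Longrightarrow> 0 \<le> R \<Longrightarrow> R < 6*K+5 \<Longrightarrow> MemI K Q R \<Longrightarrow> Q' = nxQ K Q R \<Longrightarrow> R' = nxR K Q R \<Longrightarrow>
  0 \<le> R' \<and> R' < 6*K+5 \<and> ((Q' = Q \<and> R < R') \<or> (Q' = Q+1 \<and> R' = 0)) \<and> MemI K Q' R'"
  unfolding MemI_def nxQ_def nxR_def using dm2[of "Q+1"] dm2[of "Q'+1"] dm2[of R] dm2[of R'] dm2[of "Q - 2*K"] dm2[of "Q'-2*K"] by smt

lemma NX2: "1 \<le> K \<Longrightarrow> 0 \<le> Q \<Longrightarrow> 0 \<le> R \<Longrightarrow> R < 6*K+5 \<Longrightarrow> MemI K Q R \<Longrightarrow> Q' = nxQ K Q R \<Longrightarrow> R' = nxR K Q R \<Longrightarrow>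
  R < Ry \<Longrightarrow> Ry < 6*K+5 \<Longrightarrow> (Q' = Q \<Longrightarrow> Ry < R') \<Longrightarrow> \<not> MemI K Q Ry"
  unfolding MemI_def nxQ_def nxR_def using dm2[of "Q+1"] dm2[of R] dm2[of Ry] dm2[of "Q - 2*K"] by smt

lemma memB: "1 \<le> K \<Longrightarrow> 1 \<le> Q \<Longrightarrow> Q \<le> 2*K \<Longrightarrow> 0 < R \<Longrightarrow> MemI K Q R \<Longrightarrow>
   (R mod 2 = 1 \<and> 6*K+5 \<le> R + 6*((Q+1) div 2) \<and> R + 4 \<le> 6*K+5) \<or> (Q = 2*K \<and> R = 6*K+4)"
  unfolding MemI_def by auto

lemma memC: "2*K+1 \<le> Q \<Longrightarrow> Q \<le> 4*K \<Longrightarrow> 0 < R \<Longrightarrow> MemI K Q R \<Longrightarrow>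
   (R mod 2 = 1 \<and> R+4 \<le> 6*K+5) \<or> (R mod 2 = 0 \<and> 6*K+5 \<le> R + 6*((Q-2*K) div 2) + 1 \<and> R < 6*K+5)"
  unfolding MemI_def by auto

lemma NX3:
  assumes K: "1 \<le> K" and Q: "0 \<le> Q" and R: "0 \<le> R" "R < 6*K+5" and M: "MemI K Q R"
  shows "sigI K (nxQ K Q R) (nxR K Q R) = (if sigI K Q R = 2 then 0 else sigI K Q R + 1)"
proof -
  consider (Q0) "Q = 0" | (Z) "1 \<le> Q" "R = 0" | (B) "1 \<le> Q" "Q \<le> 2*K" "0 < R"
    | (C) "2*K+1 \<le> Q" "Q \<le> 4*K" "0 < R" | (D) "4*K+1 \<le> Q" "0 < R" using Q R by linarith
  then show ?thesis
  proof cases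
    case Q0
    then have "R = 0" using M K unfolding MemI_def by auto
    then show ?thesis using Q0 K by (simp add: nxQ_def nxR_def sigI_def)
  next
    case Z
    consider "Q \<le> 2*K" | "2*K+1 \<le> Q" "Q \<le> 4*K" | "Q = 4*K+1" | "4*K+2 \<le> Q" by linarith
    then show ?thesis
    proof cases
      case 1
      define h where "h = (Q+1) div 2"
      have h: "1 \<le> h" "h \<le> K" using 1 Z unfolding h_def by presburger+
      have n: "nxQ K Q R = Q" "nxR K Q R = 6*K+5-6*h" using Z 1 by (simp_all add: nxQ_def nxR_def h_def)
      have s1: "sigI K Q R = 1" using Z 1 by (simp add: sigI_def)
      have s2: "sigI K Q (6*K+5-6*h) = (6*h+2) mod 3" using Z 1 h by (simp add: sigI_def)
      have "(6*h+2) mod 3 = 2" by presburger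
      then show ?thesis using n s1 s2 by simp
    next
      case 2
      have w: "(Q-2*K) div 2 \<le> K" using 2 by presburger
      have n: "nxQ K Q R = Q" "nxR K Q R = 1" using Z 2 K by (simp_all add: nxQ_def nxR_def)
      have s1: "sigI K Q R = 2" using Z 2 by (simp add: sigI_def)
      have s2: "sigI K Q 1 = 0" using Z 2 K w by (simp add: sigI_def)
      show ?thesis using n s1 s2 by simp
    next
      case 3
      have n: "nxQ K Q R = Q" "nxR K Q R = 1" using Z 3 K by (simp_all add: nxQ_def nxR_def)
      have s1: "sigI K Q R = 2" using Z 3 by (simp add: sigI_def)
      have s2: "sigI K Q 1 = 0" using Z 3 K by (simp add: sigI_def)
      show ?thesis using n s1 s2 by simp
    next
      case 4
      have n: "nxQ K Q R = Q" "nxR K Q R = 1" using Z 4 K by (simp_all add: nxQ_def nxR_def)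
      have s1: "sigI K Q R = (2*Q+K+2) mod 3" using Z 4 by (simp add: sigI_def)
      have s2: "sigI K Q 1 = (2*Q+K+2+1) mod 3" using Z 4 K by (simp add: sigI_def)
      have "(2*Q+K+2+1) mod 3 = (if (2*Q+K+2) mod 3 = 2 then 0 else (2*Q+K+2) mod 3 + 1)" by presburger
      then show ?thesis using n s1 s2 by simp
    qed
  next
    case B
    have mb: "(R mod 2 = 1 \<and> 6*K+5 \<le> R + 6*((Q+1) div 2) \<and> R + 4 \<le> 6*K+5) \<or> (Q = 2*K \<and> R = 6*K+4)"
      using memB[OF K B M] .
    consider "R + 4 < 6*K+5" | "R + 4 = 6*K+5" "Q = 2*K" | "R + 4 = 6*K+5" "Q \<noteq> 2*K" | "Q = 2*K" "R = 6*K+4"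
      using mb by linarith
    then show ?thesis
    proof cases
      case 1
      have ro: "R mod 2 = 1" using mb 1 by linarith
      have n: "nxQ K Q R = Q" "nxR K Q R = R+2" using B 1 by (simp_all add: nxQ_def nxR_def)
      have s1: "sigI K Q R = (6*K+5-R+2) mod 3" using B 1 by (simp add: sigI_def)
      have ne: "R + 2 + 1 \<noteq> 6*K+5" using ro by presburger
      have s2: "sigI K Q (R+2) = (6*K+5-(R+2)+2) mod 3" using B ne by (simp add: sigI_def)
      have "(6*K+5-(R+2)+2) mod 3 = (if (6*K+5-R+2) mod 3 = 2 then 0 else (6*K+5-R+2) mod 3 + 1)" by presburger
      then show ?thesis using n s1 s2 by simp
    next
      case 2
      have n: "nxQ K Q R = Q" "nxR K Q R = 6*K+4" using B 2 by (simp_all add: nxQ_def nxR_def)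
      have s1: "sigI K Q R = 0" using B 2 by (simp add: sigI_def)
      have s2: "sigI K Q (6*K+4) = 1" using B 2 K by (simp add: sigI_def)
      show ?thesis using n s1 s2 by simp
    next
      case 3
      have n: "nxQ K Q R = Q+1" "nxR K Q R = 0" using B 3 by (simp_all add: nxQ_def nxR_def)
      have s1: "sigI K Q R = 0" using B 3 by (simp add: sigI_def)
      have s2: "sigI K (Q+1) 0 = 1" using B 3 K by (simp add: sigI_def)
      show ?thesis using n s1 s2 by simp
    next
      case 4
      have n: "nxQ K Q R = Q+1" "nxR K Q R = 0" using B 4 by (simp_all add: nxQ_def nxR_def)
      have s1: "sigI K Q R = 1" using B 4 by (simp add: sigI_def)
      have s2: "sigI K (Q+1) 0 = 2" using B 4 K by (simp add: sigI_def)
      show ?thesis using n s1 s2 by simp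
    qed
  next
    case C
    define w where "w = (Q-2*K) div 2"
    have w: "0 \<le> w" "w \<le> K" using C unfolding w_def by presburger+
    have mc: "(R mod 2 = 1 \<and> R+4 \<le> 6*K+5) \<or> (R mod 2 = 0 \<and> 6*K+5 \<le> R + 6*w + 1)"
      using memC[OF C M] unfolding w_def by blast
    have sC: "\<And>R'. 0 < R' \<Longrightarrow> sigI K Q R' = (if R'+1 = 6*K+5 then 1 else if R' \<ge> 6*K+3 - 6*w then (R'+1) mod 3 else (2*R'+1) mod 3)"
      using C unfolding w_def by (simp add: sigI_def)
    have nC: "nxQ K Q R = (if R < 6*K+3 - 6*w then Q else if R + 1 = 6*K+5 then Q+1 else Q)"
       "nxR K Q R = (if R < 6*K+3 - 6*w then (if R + 4 = 6*K+5 then 6*K+4 else R+2)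
                        else (if R + 3 = 6*K+5 then 6*K+4 else if R + 1 = 6*K+5 then 0 else R+1))"
      using C unfolding w_def by (simp_all add: nxQ_def nxR_def)
    consider (c1) "R < 6*K+3 - 6*w" "R + 4 = 6*K+5" | (c2) "R < 6*K+3 - 6*w" "R + 4 \<noteq> 6*K+5"
      | (c3) "R \<ge> 6*K+3 - 6*w" "R + 3 = 6*K+5" | (c4) "R \<ge> 6*K+3 - 6*w" "R + 1 = 6*K+5"
      | (c5) "R \<ge> 6*K+3 - 6*w" "R + 3 \<noteq> 6*K+5" "R + 1 \<noteq> 6*K+5" by linarith
    then show ?thesis
    proof cases
      case c1
      have "sigI K Q R = 0" using sC[of R] c1 C w by (simp; presburger)
      moreover have "sigI K Q (6*K+4) = 1" using sC[of "6*K+4"] K by simp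
      ultimately show ?thesis using nC c1 by simp
    next
      case c2
      have ro: "R mod 2 = 1" using mc c2 by linarith
      have s1: "sigI K Q R = (2*R+1) mod 3" using sC[of R] c2 C w by simp
      have le: "R + 2 \<le> 6*K+3 - 6*w" using ro c2 by presburger
      have ne: "R + 2 + 1 \<noteq> 6*K+5" using ro by presburger
      show ?thesis
      proof (cases "R + 2 < 6*K+3 - 6*w")
        case True
        have "sigI K Q (R+2) = (2*(R+2)+1) mod 3" using sC[of "R+2"] True ne C by simp
        moreover have "(2*(R+2)+1) mod 3 = (if (2*R+1) mod 3 = 2 then 0 else (2*R+1) mod 3 + 1)" by presburger
        ultimately show ?thesis using nC c2 s1 by simp
      next
        case False
        then have eq: "R + 2 = 6*K+3 - 6*w" using le by linarith
        have ge: "R+2 \<ge> 6*K+3 - 6*w" using eq by linarith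
        have "sigI K Q (R+2) = (R+2+1) mod 3" using sC[of "R+2"] ge ne C by simp
        moreover have "(R+2+1) mod 3 = (if (2*R+1) mod 3 = 2 then 0 else (2*R+1) mod 3 + 1)" using eq by presburger
        ultimately show ?thesis using nC c2 s1 by simp
      qed
    next
      case c3
      have "sigI K Q R = 0" using sC[of R] c3 C w by (simp; presburger)
      moreover have "sigI K Q (6*K+4) = 1" using sC[of "6*K+4"] K by simp
      ultimately show ?thesis using nC c3 by simp
    next
      case c4
      have "sigI K Q R = 1" using sC[of R] c4 C by simp
      moreover have "sigI K (Q+1) 0 = 2" using C by (simp add: sigI_def)
      moreover have "\<not> R < 6*K+3 - 6*w" using c4 by linarith
      ultimately show ?thesis using nC c4 by simp
    next
      case c5
      have nr: "R + 2 \<noteq> 6*K+5" using mc c5 by presburger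
      have "sigI K Q R = (R+1) mod 3" using sC[of R] c5 C by simp
      moreover have "sigI K Q (R+1) = (R+1+1) mod 3" using sC[of "R+1"] c5 C nr by simp
      moreover have "(R+1+1) mod 3 = (if (R+1) mod 3 = 2 then 0 else (R+1) mod 3 + 1)" by presburger
      moreover have "\<not> R < 6*K+3 - 6*w" using c5 by linarith
      ultimately show ?thesis using nC c5 by simp
    qed
  next
    case D
    have sD: "\<And>Q' R'. 4*K+1 \<le> Q' \<Longrightarrow> 0 < R' \<Longrightarrow> sigI K Q' R' = (if Q' = 4*K+1 \<and> R' = 1 then 0 else (2*Q'+K+2+R') mod 3)"
      using K by (simp add: sigI_def)
    consider (d1) "Q = 4*K+1" "R = 1" | (d2) "R + 1 = 6*K+5" | (d3) "\<not> (Q = 4*K+1 \<and> R = 1)" "R + 1 \<noteq> 6*K+5" using K by linarith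
    then show ?thesis
    proof cases
      case d1
      have n: "nxQ K Q R = Q" "nxR K Q R = 3" using D d1 K by (auto simp add: nxQ_def nxR_def)
      have s1: "sigI K Q R = 0" using sD[of Q R] d1 by simp
      have s2: "sigI K Q 3 = 1" using sD[of Q 3] d1 by (simp; presburger)
      show ?thesis by (simp only: n s1 s2) simp
    next
      case d2
      have n: "nxQ K Q R = Q+1" "nxR K Q R = 0" using D d2 K by (auto simp add: nxQ_def nxR_def)
      have s1: "sigI K Q R = (2*Q+K+2+R) mod 3" using sD[of Q R] d2 D K by auto
      have s2: "sigI K (Q+1) 0 = (2*(Q+1)+K+2) mod 3" using D K by (simp add: sigI_def)
      have e: "(2*(Q+1)+K+2) mod 3 = (if (2*Q+K+2+R) mod 3 = 2 then 0 else (2*Q+K+2+R) mod 3 + 1)" using d2 by presburger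
      show ?thesis by (simp only: n s1 s2 e)
    next
      case d3
      have n: "nxQ K Q R = Q" "nxR K Q R = R+1" using D d3 K by (auto simp add: nxQ_def nxR_def)
      have s1: "sigI K Q R = (2*Q+K+2+R) mod 3" using sD[of Q R] d3 D by auto
      have s2: "sigI K Q (R+1) = (2*Q+K+2+(R+1)) mod 3" using sD[of Q "R+1"] d3 D by auto
      have e: "(2*Q+K+2+(R+1)) mod 3 = (if (2*Q+K+2+R) mod 3 = 2 then 0 else (2*Q+K+2+R) mod 3 + 1)" by presburger
      show ?thesis by (simp only: n s1 s2 e)
    qed
  qed
qed

definition dX :: "int \<Rightarrow> int \<Rightarrow> int \<Rightarrow> int" where
"dX K Q R = (if nxQ K Q R = Q then nxR K Q R - R else 6*K+5 - R)"

lemma DSTEP: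
  assumes K: "1 \<le> K" and Q: "0 \<le> Q" and R: "0 \<le> R" "R < 6*K+5" and M: "MemI K Q R" and S: "sigI K Q R = 1"
  shows "(dX K Q R = 1 \<and> dX K (nxQ K Q R) (nxR K Q R) = 1) \<or> (dX K Q R = 2 \<and> dX K (nxQ K Q R) (nxR K Q R) = 2)
     \<or> (dX K Q R mod 3 = 2 \<and> dX K (nxQ K Q R) (nxR K Q R) = 2)"
proof -
  consider (Q0) "Q = 0" | (Z) "1 \<le> Q" "R = 0" | (B) "1 \<le> Q" "Q \<le> 2*K" "0 < R"
    | (C) "2*K+1 \<le> Q" "Q \<le> 4*K" "0 < R" | (D) "4*K+1 \<le> Q" "0 < R" using Q R by linarith
  then show ?thesis
  proof cases
    case Q0
    then show ?thesis using S by (simp add: sigI_def)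
  next
    case Z
    consider "Q \<le> 2*K" | "2*K+1 \<le> Q" "Q \<le> 4*K+1" | "4*K+2 \<le> Q" by linarith
    then show ?thesis
    proof cases
      case 1
      define h where "h = (Q+1) div 2"
      have h: "1 \<le> h" "h \<le> K" using 1 Z unfolding h_def by presburger+
      have n: "nxQ K Q R = Q" "nxR K Q R = 6*K+5-6*h" using Z 1 by (simp_all add: nxQ_def nxR_def h_def)
      have d1: "dX K Q R = 6*K+5-6*h" using n Z by (simp add: dX_def)
      have n2: "nxQ K Q (6*K+5-6*h) = Q" "nxR K Q (6*K+5-6*h) = 6*K+5-6*h+2" using Z 1 h by (simp_all add: nxQ_def nxR_def)
      have d2: "dX K Q (6*K+5-6*h) = 2" using n2 by (simp add: dX_def)
      have "(6*K+5-6*h) mod 3 = 2" by presburger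
      then show ?thesis using n d1 d2 by simp
    next
      case 2
      then show ?thesis using S Z by (simp add: sigI_def)
    next
      case 3
      have n: "nxQ K Q R = Q" "nxR K Q R = 1" using Z 3 K by (simp_all add: nxQ_def nxR_def)
      have d1: "dX K Q R = 1" using n Z by (simp add: dX_def)
      have n2: "nxQ K Q 1 = Q" "nxR K Q 1 = 2" using Z 3 K by (simp_all add: nxQ_def nxR_def)
      have d2: "dX K Q 1 = 1" using n2 by (simp add: dX_def)
      show ?thesis using n d1 d2 by simp
    qed
  next
    case B
    have mb: "(R mod 2 = 1 \<and> 6*K+5 \<le> R + 6*((Q+1) div 2) \<and> R + 4 \<le> 6*K+5) \<or> (Q = 2*K \<and> R = 6*K+4)"
      using memB[OF K B M] .
    consider "R + 4 < 6*K+5" | "R + 4 = 6*K+5" | "Q = 2*K" "R = 6*K+4"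
      using mb by linarith
    then show ?thesis
    proof cases
      case 1
      have ro: "R mod 2 = 1" using mb 1 by linarith
      have s1: "sigI K Q R = (6*K+5-R+2) mod 3" using B 1 by (simp add: sigI_def)
      have r6: "R + 6 < 6*K+5" using ro 1 S s1 by presburger
      have n: "nxQ K Q R = Q" "nxR K Q R = R+2" using B 1 by (simp_all add: nxQ_def nxR_def)
      have d1: "dX K Q R = 2" using n by (simp add: dX_def)
      have n2: "nxQ K Q (R+2) = Q" "nxR K Q (R+2) = R+4" using B r6 by (simp_all add: nxQ_def nxR_def)
      have d2: "dX K Q (R+2) = 2" using n2 by (simp add: dX_def)
      show ?thesis using n d1 d2 by simp
    next
      case 2
      have "sigI K Q R = 0" using B 2 by (simp add: sigI_def)
      then show ?thesis using S by simp
    next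
      case 3
      have n: "nxQ K Q R = Q+1" "nxR K Q R = 0" using B 3 by (simp_all add: nxQ_def nxR_def)
      have d1: "dX K Q R = 1" using n 3 by (simp add: dX_def)
      have n2: "nxQ K (Q+1) 0 = Q+1" "nxR K (Q+1) 0 = 1" using B 3 K by (simp_all add: nxQ_def nxR_def)
      have d2: "dX K (Q+1) 0 = 1" using n2 by (simp add: dX_def)
      show ?thesis using n d1 d2 by simp
    qed
  next
    case C
    define w where "w = (Q-2*K) div 2"
    have w: "0 \<le> w" "w \<le> K" using C unfolding w_def by presburger+
    have mc: "(R mod 2 = 1 \<and> R+4 \<le> 6*K+5) \<or> (R mod 2 = 0 \<and> 6*K+5 \<le> R + 6*w + 1)"
      using memC[OF C M] unfolding w_def by blast
    have sC: "\<And>R'. 0 < R' \<Longrightarrow> sigI K Q R' = (if R'+1 = 6*K+5 then 1 else if R' \<ge> 6*K+3 - 6*w then (R'+1) mod 3 else (2*R'+1) mod 3)"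
      using C unfolding w_def by (simp add: sigI_def)
    have nC: "\<And>R'. 0 < R' \<Longrightarrow> nxQ K Q R' = (if R' < 6*K+3 - 6*w then Q else if R' + 1 = 6*K+5 then Q+1 else Q)"
       "\<And>R'. 0 < R' \<Longrightarrow> nxR K Q R' = (if R' < 6*K+3 - 6*w then (if R' + 4 = 6*K+5 then 6*K+4 else R'+2)
                        else (if R' + 3 = 6*K+5 then 6*K+4 else if R' + 1 = 6*K+5 then 0 else R'+1))"
      using C unfolding w_def by (simp_all add: nxQ_def nxR_def)
    consider (c1) "R < 6*K+3 - 6*w" "R + 4 = 6*K+5" | (c2) "R < 6*K+3 - 6*w" "R + 4 \<noteq> 6*K+5"
      | (c3) "R \<ge> 6*K+3 - 6*w" "R + 3 = 6*K+5" | (c4) "R \<ge> 6*K+3 - 6*w" "R + 1 = 6*K+5"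
      | (c5) "R \<ge> 6*K+3 - 6*w" "R + 3 \<noteq> 6*K+5" "R + 1 \<noteq> 6*K+5" by linarith
    then show ?thesis
    proof cases
      case c1
      have "sigI K Q R = 0" using sC[of R] c1 C w by (simp; presburger)
      then show ?thesis using S by simp
    next
      case c2
      have ro: "R mod 2 = 1" using mc c2 by linarith
      have s1: "(2*R+1) mod 3 = 1" using sC[of R] c2 C w S by simp
      have lt: "R + 2 < 6*K+3 - 6*w" using ro c2 s1 by presburger
      have r6: "R + 2 + 4 \<noteq> 6*K+5" using s1 by presburger
      have n: "nxQ K Q R = Q" "nxR K Q R = R+2" using nC[of R] c2 C by simp_all
      have d1: "dX K Q R = 2" using n by (simp add: dX_def)
      have n2: "nxQ K Q (R+2) = Q" "nxR K Q (R+2) = R+4" using nC[of "R+2"] lt r6 C by simp_all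
      have d2: "dX K Q (R+2) = 2" using n2 by (simp add: dX_def)
      show ?thesis using n d1 d2 by simp
    next
      case c3
      have "sigI K Q R = 0" using sC[of R] c3 C w by (simp; presburger)
      then show ?thesis using S by simp
    next
      case c4
      have n: "nxQ K Q R = Q+1" "nxR K Q R = 0" using nC[of R] c4 C by simp_all
      have d1: "dX K Q R = 1" using n c4 by (simp add: dX_def)
      have n2: "nxQ K (Q+1) 0 = Q+1" "nxR K (Q+1) 0 = 1" using C K by (simp_all add: nxQ_def nxR_def)
      have d2: "dX K (Q+1) 0 = 1" using n2 by (simp add: dX_def)
      show ?thesis using n d1 d2 by simp
    next
      case c5
      have nr: "R + 2 \<noteq> 6*K+5" using mc c5 by presburger
      have s1: "(R+1) mod 3 = 1" using sC[of R] c5 C S by simp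
      have r4: "R + 1 + 3 \<noteq> 6*K+5" using s1 by presburger
      have n: "nxQ K Q R = Q" "nxR K Q R = R+1" using nC[of R] c5 C by simp_all
      have d1: "dX K Q R = 1" using n by (simp add: dX_def)
      have n2: "nxQ K Q (R+1) = Q" "nxR K Q (R+1) = R+2" using nC[of "R+1"] c5 C nr r4 by simp_all
      have d2: "dX K Q (R+1) = 1" using n2 by (simp add: dX_def)
      show ?thesis using n d1 d2 by simp
    qed
  next
    case D
    consider (d1) "Q = 4*K+1" "R = 1" | (d2) "R + 1 = 6*K+5" | (d3) "\<not> (Q = 4*K+1 \<and> R = 1)" "R + 1 \<noteq> 6*K+5" using K by linarith
    then show ?thesis
    proof cases
      case d1
      have "sigI K Q R = 0" using d1 K by (simp add: sigI_def)
      then show ?thesis using S by simp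
    next
      case d2
      have n: "nxQ K Q R = Q+1" "nxR K Q R = 0" using D d2 K by (auto simp add: nxQ_def nxR_def)
      have d1: "dX K Q R = 1" using n d2 by (simp add: dX_def)
      have n2: "nxQ K (Q+1) 0 = Q+1" "nxR K (Q+1) 0 = 1" using D K by (simp_all add: nxQ_def nxR_def)
      have d2': "dX K (Q+1) 0 = 1" using n2 by (simp add: dX_def)
      show ?thesis using n d1 d2' by simp
    next
      case d3
      have n: "nxQ K Q R = Q" "nxR K Q R = R+1" using D d3 K by (auto simp add: nxQ_def nxR_def)
      have d1: "dX K Q R = 1" using n by (simp add: dX_def)
      have d2': "dX K Q (R+1) = 1"
      proof (cases "R + 2 = 6*K+5")
        case True
        then have "nxQ K Q (R+1) = Q+1" "nxR K Q (R+1) = 0" using D K by (auto simp add: nxQ_def nxR_def)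
        then show ?thesis using True by (simp add: dX_def)
      next
        case False
        then have "nxQ K Q (R+1) = Q" "nxR K Q (R+1) = R+2" using D K by (auto simp add: nxQ_def nxR_def)
        then show ?thesis by (simp add: dX_def)
      qed
      show ?thesis using n d1 d2' by simp
    qed
  qed
qed



lemma gen3: "x \<in> gen {u,v,w} \<longleftrightarrow> (\<exists>\<alpha> \<beta> \<gamma>. x = \<alpha>*u + \<beta>*v + \<gamma>*w)"
proof
  assume "x \<in> gen {u,v,w}"
  then show "\<exists>\<alpha> \<beta> \<gamma>. x = \<alpha>*u + \<beta>*v + \<gamma>*w"
  proof (induction rule: gen.induct)
    case gen_zero
    then show ?case by (rule exI[of _ 0], rule exI[of _ 0], rule exI[of _ 0]) simp
  next
    case (gen_elem s)
    then consider "s = u" | "s = v" | "s = w" by blast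
    then show ?case
    proof cases
      case 1 then show ?thesis by (intro exI[of _ 1] exI[of _ 0]) simp
    next
      case 2 then show ?thesis by (intro exI[of _ 0] exI[of _ 1]) simp
    next
      case 3 then show ?thesis by (intro exI[of _ 0] exI[of _ 1]) simp
    qed
  next
    case (gen_add x y)
    then obtain a1 b1 c1 a2 b2 c2 where "x = a1*u + b1*v + c1*w" "y = a2*u + b2*v + c2*w" by blast
    then have "x + y = (a1+a2)*u + (b1+b2)*v + (c1+c2)*w" by (simp add: algebra_simps)
    then show ?case by blast
  qed
next
  have m: "\<And>m s. s \<in> {u,v,w} \<Longrightarrow> m * s \<in> gen {u,v,w}"
  proof -
    fix m s assume s: "s \<in> {u,v,w}"
    show "m * s \<in> gen {u,v,w}"
    proof (induction m)
      case 0 then show ?case by (simp add: gen_zero)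
      case (Suc m) then show ?case using gen_add[OF gen_elem[OF s] Suc] by simp
    qed
  qed
  assume "\<exists>\<alpha> \<beta> \<gamma>. x = \<alpha>*u + \<beta>*v + \<gamma>*w"
  then obtain \<alpha> \<beta> \<gamma> where "x = \<alpha>*u + \<beta>*v + \<gamma>*w" by blast
  then show "x \<in> gen {u,v,w}" using m[of u \<alpha>] m[of v \<beta>] m[of w \<gamma>] by (auto intro!: gen_add)
qed

definition JJ :: "nat \<Rightarrow> nat \<Rightarrow> bool" where
"JJ k x \<longleftrightarrow> (\<exists>n j. x + 2*j = n * aa k \<and> (j = 0 \<or> (2 \<le> j \<and> j \<le> 3*(n div 2))))"


lemma j3: "2 \<le> (j::nat) \<Longrightarrow> 2 * ((j+2) div 3) \<le> j \<and> j \<le> 3 * ((j+2) div 3)" by presburger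
lemma j3b: "(j::nat) \<le> 3*m \<Longrightarrow> (j+2) div 3 \<le> m" by presburger

lemma G_JJ: "x \<in> Gk k \<longleftrightarrow> JJ k x"
proof -
  have e: "2 * aa k - 6 = 12*k+4" "2 * aa k - 4 = 12*k+6" by (simp_all add: aa_def)
  have "x \<in> Gk k \<longleftrightarrow> (\<exists>\<alpha> \<beta> \<gamma>. x = \<alpha>*aa k + \<beta>*(12*k+4) + \<gamma>*(12*k+6))"
    unfolding Gk_def gen3 e ..
  also have "\<dots> \<longleftrightarrow> JJ k x"
  proof
    assume "\<exists>\<alpha> \<beta> \<gamma>. x = \<alpha>*aa k + \<beta>*(12*k+4) + \<gamma>*(12*k+6)"
    then obtain \<alpha> \<beta> \<gamma> where x: "x = \<alpha>*aa k + \<beta>*(12*k+4) + \<gamma>*(12*k+6)" by blast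
    have id: "\<alpha>*aa k + \<beta>*(12*k+4) + \<gamma>*(12*k+6) + 2*(3*\<beta>+2*\<gamma>) = (\<alpha>+2*\<beta>+2*\<gamma>) * aa k"
      by (simp add: aa_def algebra_simps)
    have d0: "(\<alpha>+2*\<beta>+2*\<gamma>) = \<alpha> + (\<beta>+\<gamma>)*2" by simp
    have d: "(\<alpha>+2*\<beta>+2*\<gamma>) div 2 \<ge> \<beta> + \<gamma>" unfolding d0 by simp
    show "JJ k x" unfolding JJ_def
    proof (intro exI conjI)
      show "x + 2*(3*\<beta>+2*\<gamma>) = (\<alpha>+2*\<beta>+2*\<gamma>) * aa k" using x id by simp
      show "3*\<beta>+2*\<gamma> = 0 \<or> 2 \<le> 3*\<beta>+2*\<gamma> \<and> 3*\<beta>+2*\<gamma> \<le> 3*((\<alpha>+2*\<beta>+2*\<gamma>) div 2)"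
      proof (cases "\<beta> + \<gamma> = 0")
        case True then show ?thesis by simp
      next
        case False then show ?thesis using d by (intro disjI2 conjI; linarith)
      qed
    qed
  next
    assume "JJ k x"
    then obtain n j where nj: "x + 2*j = n * aa k" "j = 0 \<or> (2 \<le> j \<and> j \<le> 3*(n div 2))" unfolding JJ_def by blast
    show "\<exists>\<alpha> \<beta> \<gamma>. x = \<alpha>*aa k + \<beta>*(12*k+4) + \<gamma>*(12*k+6)"
    proof (cases "j = 0")
      case True
      then show ?thesis using nj by (intro exI[of _ n] exI[of _ 0]) simp
    next
      case False
      define q where "q = (j+2) div 3"
      have jq: "2*q \<le> j" "j \<le> 3*q" using j3[of j] nj False unfolding q_def by auto
      have qn: "2*q \<le> n" using j3b[of j "n div 2"] nj False unfolding q_def by linarith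
      define \<beta> where "\<beta> = j - 2*q"
      define \<gamma> where "\<gamma> = 3*q - j"
      define \<alpha> where "\<alpha> = n - 2*q"
      have l: "\<alpha> + 2*\<beta> + 2*\<gamma> = n" "3*\<beta> + 2*\<gamma> = j" using jq qn unfolding \<alpha>_def \<beta>_def \<gamma>_def by arith+
      have id: "\<alpha>*aa k + \<beta>*(12*k+4) + \<gamma>*(12*k+6) + 2*(3*\<beta>+2*\<gamma>) = (\<alpha>+2*\<beta>+2*\<gamma>) * aa k"
        by (simp add: aa_def algebra_simps)
      have "\<alpha>*aa k + \<beta>*(12*k+4) + \<gamma>*(12*k+6) + 2*j = n * aa k" using id unfolding l .
      then have "x = \<alpha>*aa k + \<beta>*(12*k+4) + \<gamma>*(12*k+6)" using nj(1) by linarith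
      then show ?thesis by blast
    qed
  qed
  finally show ?thesis .
qed

lemma part1: "JJ k x \<longleftrightarrow> (\<exists>q r s :: nat. r \<le> q \<and> int x = int ((s + 2 * q) * aa k) - 6 * int q + 2 * int r)"
proof
  assume "JJ k x"
  then obtain n j where nj: "x + 2*j = n * aa k" "j = 0 \<or> (2 \<le> j \<and> j \<le> 3*(n div 2))" unfolding JJ_def by blast
  show "\<exists>q r s :: nat. r \<le> q \<and> int x = int ((s + 2 * q) * aa k) - 6 * int q + 2 * int r"
  proof (cases "j = 0")
    case True
    then show ?thesis using nj by (intro exI[of _ 0] exI[of _ 0] exI[of _ n]) simp
  next
    case False
    define q where "q = (j+2) div 3"
    have jq: "2*q \<le> j" "j \<le> 3*q" using j3[of j] nj False unfolding q_def by auto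
    have qn: "2*q \<le> n" using j3b[of j "n div 2"] nj False unfolding q_def by linarith
    have e: "int x = int (n * aa k) - 2 * int j" using nj(1) by (simp add: algebra_simps flip: of_nat_add of_nat_mult)
    show ?thesis
    proof (intro exI conjI)
      show "3*q - j \<le> q" using jq by linarith
      show "int x = int ((n - 2*q + 2 * q) * aa k) - 6 * int q + 2 * int (3*q - j)"
        using e jq qn by (simp add: of_nat_diff)
    qed
  qed
next
  assume "\<exists>q r s :: nat. r \<le> q \<and> int x = int ((s + 2 * q) * aa k) - 6 * int q + 2 * int r"
  then obtain q r s where h: "r \<le> q" "int x = int ((s + 2 * q) * aa k) - 6 * int q + 2 * int r" by blast
  have "x + 2*(3*q - r) = (s + 2*q) * aa k"
  proof -
    have "int (x + 2*(3*q - r)) = int ((s + 2*q) * aa k)" using h by (simp add: of_nat_diff)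
    then show ?thesis by (simp only: of_nat_eq_iff)
  qed
  moreover have "3*q - r = 0 \<or> (2 \<le> 3*q - r \<and> 3*q - r \<le> 3*((s + 2*q) div 2))"
  proof (cases "q = 0")
    case True then show ?thesis by simp
  next
    case False
    have d0: "s + 2*q = s + q*2" by simp
    have "(s + 2*q) div 2 \<ge> q" unfolding d0 by simp
    then show ?thesis using False h(1) by (intro disjI2 conjI; linarith)
  qed
  ultimately show "JJ k x" unfolding JJ_def by blast
qed

lemma C1: "1 \<le> K \<Longrightarrow> 0 \<le> N \<Longrightarrow> N \<le> 4*K+2 \<Longrightarrow> 2 \<le> J \<Longrightarrow> J \<le> 3*(N div 2) \<Longrightarrow> 2*J < 6*K+5 \<Longrightarrow> MemI K (N-1) (6*K+5-2*J)"
  unfolding MemI_def using dm2[of N] dm2[of "N-1+1"] dm2[of "N-1-2*K"] dm2[of "6*K+5-2*J"] by smt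

lemma C2: "1 \<le> K \<Longrightarrow> 0 \<le> N \<Longrightarrow> N \<le> 4*K+2 \<Longrightarrow> 2 \<le> J \<Longrightarrow> J \<le> 3*(N div 2) \<Longrightarrow> 2*J > 6*K+5 \<Longrightarrow> 2*J < 12*K+10 \<and> MemI K (N-2) (12*K+10-2*J)"
  unfolding MemI_def using dm2[of N] dm2[of "N-2+1"] dm2[of "N-2-2*K"] dm2[of "12*K+10-2*J"] by smt

lemma CB1: "1 \<le> K \<Longrightarrow> 0 \<le> Q \<Longrightarrow> 0 < R \<Longrightarrow> R < 6*K+5 \<Longrightarrow> MemI K Q R \<Longrightarrow> R mod 2 = 1 \<Longrightarrow> R \<noteq> 6*K+3 \<Longrightarrow> 2*J = 6*K+5-R \<Longrightarrow> 2 \<le> J \<and> J \<le> 3*((Q+1) div 2)"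
  unfolding MemI_def using dm2[of Q] dm2[of "Q+1"] dm2[of "Q-2*K"] dm2[of R] by smt

lemma CB2: "1 \<le> K \<Longrightarrow> 0 \<le> Q \<Longrightarrow> MemI K Q (6*K+3) \<Longrightarrow> 4*K+1 \<le> Q"
  unfolding MemI_def using dm2[of Q] dm2[of "Q+1"] dm2[of "Q-2*K"] dm2[of "6*K+3"] by smt

lemma CB3: "1 \<le> K \<Longrightarrow> 0 \<le> Q \<Longrightarrow> 0 < R \<Longrightarrow> R < 6*K+5 \<Longrightarrow> MemI K Q R \<Longrightarrow> R mod 2 = 0 \<Longrightarrow> 2*J = 12*K+10-R \<Longrightarrow> 2 \<le> J \<and> J \<le> 3*((Q+2) div 2)"
  unfolding MemI_def using dm2[of Q] dm2[of "Q+1"] dm2[of "Q+2"] dm2[of "Q-2*K"] dm2[of R] by smt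

lemma CB4: "1 \<le> (K::int) \<Longrightarrow> 4*K+1 \<le> Q \<Longrightarrow> 6*K+6 \<le> 3*((Q+3) div 2)"
  using dm2[of "Q+3"] by smt

lemma BIG1: "1 \<le> (K::int) \<Longrightarrow> N \<ge> 4*K+3 \<Longrightarrow> J \<le> 3*(N div 2) \<Longrightarrow> X + 2*J = N*(6*K+5) \<Longrightarrow> X \<ge> (4*K+1)*(6*K+5) + 4"
proof -
  assume a: "1 \<le> K" "N \<ge> 4*K+3" "J \<le> 3*(N div 2)" "X + 2*J = N*(6*K+5)"
  define E where "E = (N - 4*K - 3)*(6*K+5)"
  have E1: "E \<ge> (N - 4*K - 3)*11" unfolding E_def using a by (intro mult_left_mono) auto
  have E2: "N*(6*K+5) = (4*K+1)*(6*K+5) + 2*(6*K+5) + E" unfolding E_def by (simp add: algebra_simps)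
  show ?thesis using a E1 E2 dm2[of N] by smt
qed

lemma BIG2: "(0::int) < A \<Longrightarrow> X = Q*A + R \<Longrightarrow> 0 \<le> R \<Longrightarrow> R < A \<Longrightarrow> X \<ge> M*A + c \<Longrightarrow> 0 \<le> c \<Longrightarrow> Q \<ge> M \<and> (Q = M \<longrightarrow> R \<ge> c)"
proof -
  assume a: "(0::int) < A" "X = Q*A + R" "0 \<le> R" "R < A" "X \<ge> M*A + c" "0 \<le> c"
  have "Q \<ge> M"
  proof (rule ccontr)
    assume "\<not> Q \<ge> M"
    then have "Q + 1 \<le> M" by simp
    then have "(Q+1)*A \<le> M*A" using a(1) by (intro mult_right_mono) auto
    then show False using a by (simp add: algebra_simps)
  qed
  moreover have "Q = M \<longrightarrow> R \<ge> c" using a by auto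
  ultimately show ?thesis by blast
qed

lemma divuniq: "(0::int) < A \<Longrightarrow> 0 \<le> R \<Longrightarrow> R < A \<Longrightarrow> 0 \<le> R' \<Longrightarrow> R' < A \<Longrightarrow> Q*A + R = Q'*A + R' \<Longrightarrow> Q = Q' \<and> R = R'"
proof -
  assume a: "(0::int) < A" "0 \<le> R" "R < A" "0 \<le> R'" "R' < A" "Q*A + R = Q'*A + R'"
  have "Q' \<ge> Q" using BIG2[of A "Q'*A+R'" Q' R' Q R] a by auto
  moreover have "Q \<ge> Q'" using BIG2[of A "Q*A+R" Q R Q' R'] a by auto
  ultimately show ?thesis using a by auto
qed

lemma aaI: "int (aa k) = 6 * int k + 5" by (simp add: aa_def)

lemma JJI: "int x + 2*J = N * int (aa k) \<Longrightarrow> 0 \<le> J \<Longrightarrow> 0 \<le> N \<Longrightarrow> (J = 0 \<or> (2 \<le> J \<and> J \<le> 3*(N div 2))) \<Longrightarrow> JJ k x"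
proof -
  assume a: "int x + 2*J = N * int (aa k)" "0 \<le> J" "0 \<le> N" "J = 0 \<or> (2 \<le> J \<and> J \<le> 3*(N div 2))"
  define n where "n = nat N"
  define j where "j = nat J"
  have iN: "int n = N" and iJ: "int j = J" using a by (simp_all add: n_def j_def)
  have "int (x + 2*j) = int (n * aa k)" using a(1) iN iJ by simp
  then have e: "x + 2*j = n * aa k" by (simp only: of_nat_eq_iff)
  have d: "int (n div 2) = N div 2" using iN by (simp add: zdiv_int)
  have "j = 0 \<or> (2 \<le> j \<and> j \<le> 3*(n div 2))"
  proof -
    have "int j = 0 \<or> (2 \<le> int j \<and> int j \<le> 3*int (n div 2))" using a(4) iJ d by simp
    then show ?thesis by linarith
  qed
  then show ?thesis unfolding JJ_def using e by blast
qed

lemma COORD: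
  assumes k: "1 \<le> k" and x: "int x = Q * (6*int k+5) + R" and Q: "0 \<le> Q" and R: "0 \<le> R" "R < 6*int k+5"
  shows "JJ k x \<longleftrightarrow> MemI (int k) Q R"
proof
  assume "JJ k x"
  then obtain n j where nj: "x + 2*j = n * aa k" "j = 0 \<or> (2 \<le> j \<and> j \<le> 3*(n div 2))" unfolding JJ_def by blast
  define N where "N = int n"
  define J where "J = int j"
  define K where "K = int k"
  have K1: "1 \<le> K" using k unfolding K_def by simp
  have "int (x + 2*j) = int (n * aa k)" using nj(1) by (simp only: of_nat_eq_iff)
  then have e: "int x + 2*J = N*(6*K+5)" unfolding N_def J_def K_def by (simp add: aaI)
  have dN: "int (n div 2) = N div 2" unfolding N_def by (simp add: zdiv_int)
  have Jd: "J = 0 \<or> (2 \<le> J \<and> J \<le> 3*(N div 2))" using nj(2) dN unfolding J_def by auto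
  have N0: "0 \<le> N" "0 \<le> J" unfolding N_def J_def by simp_all
  have xK: "int x = Q * (6*K+5) + R" using x unfolding K_def .
  have RK: "R < 6*K+5" using R unfolding K_def by simp
  have A0: "(0::int) < 6*K+5" using K1 by simp
  have par: "2*J \<noteq> 6*K+5" by presburger
  consider (z) "J = 0" | (big) "2 \<le> J" "J \<le> 3*(N div 2)" "N \<ge> 4*K+3" | (s1) "2 \<le> J" "J \<le> 3*(N div 2)" "N \<le> 4*K+2" "2*J < 6*K+5"
    | (s2) "2 \<le> J" "J \<le> 3*(N div 2)" "N \<le> 4*K+2" "2*J > 6*K+5" using Jd par by linarith
  then show "MemI (int k) Q R"
  proof cases
    case z
    have "Q*(6*K+5) + R = N*(6*K+5) + 0" using e xK z by simp
    then have "R = 0" using divuniq[OF A0 R(1) RK, of 0 Q N] A0 by auto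
    then show ?thesis unfolding MemI_def by simp
  next
    case big
    have "int x \<ge> (4*K+1)*(6*K+5) + 4" using BIG1[OF K1 big(3) big(2)] e by simp
    then have "Q \<ge> 4*K+1 \<and> (Q = 4*K+1 \<longrightarrow> R \<ge> 4)" using BIG2[OF A0 xK R(1) RK, of "4*K+1" 4] by simp
    then show ?thesis using R(1) unfolding MemI_def K_def by auto
  next
    case s1
    have "int x = (N-1)*(6*K+5) + (6*K+5-2*J)" using e by (simp add: algebra_simps)
    then have "Q = N-1 \<and> R = 6*K+5-2*J" using divuniq[OF A0 R(1) RK, of "6*K+5-2*J" Q "N-1"] xK s1 by auto
    then show ?thesis using C1[OF K1 N0(1) s1(3) s1(1) s1(2) s1(4)] unfolding K_def by simp
  next
    case s2
    have c2: "2*J < 12*K+10 \<and> MemI K (N-2) (12*K+10-2*J)" using C2[OF K1 N0(1) s2(3) s2(1) s2(2) s2(4)] .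
    have "int x = (N-2)*(6*K+5) + (12*K+10-2*J)" using e by (simp add: algebra_simps)
    then have "Q = N-2 \<and> R = 12*K+10-2*J" using divuniq[OF A0 R(1) RK, of "12*K+10-2*J" Q "N-2"] xK s2 c2 by auto
    then show ?thesis using c2 unfolding K_def by simp
  qed
next
  assume M: "MemI (int k) Q R"
  define K where "K = int k"
  have K1: "1 \<le> K" using k unfolding K_def by simp
  have MK: "MemI K Q R" using M unfolding K_def .
  have xK: "int x = Q * (6*K+5) + R" using x unfolding K_def .
  have RK: "R < 6*K+5" using R unfolding K_def by simp
  have ak: "int (aa k) = 6*K+5" unfolding K_def by (simp add: aaI)
  consider (z) "R = 0" | (o) "0 < R" "R mod 2 = 1" "R \<noteq> 6*K+3" | (o3) "R = 6*K+3" | (e) "0 < R" "R mod 2 = 0"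
  proof -
    have m2: "R mod 2 = 0 \<or> R mod 2 = 1" by presburger
    show ?thesis using that R(1) m2 by (cases "R = 0"; cases "R = 6*K+3") auto
  qed
  then show "JJ k x"
  proof cases
    case z
    show ?thesis by (rule JJI[of x 0 Q]) (use xK z ak Q in auto)
  next
    case o
    define J where "J = (6*K+5-R) div 2"
    have J2: "2*J = 6*K+5-R" unfolding J_def using o(2) by presburger
    have b: "2 \<le> J \<and> J \<le> 3*((Q+1) div 2)" using CB1[OF K1 Q o(1) RK MK o(2) o(3) J2] .
    show ?thesis by (rule JJI[of x J "Q+1"]) (use xK J2 b ak Q in \<open>auto simp: algebra_simps\<close>)
  next
    case o3
    have q: "4*K+1 \<le> Q" using CB2[OF K1 Q] MK o3 by simp
    have b: "6*K+6 \<le> 3*((Q+3) div 2)" using CB4[OF K1 q] .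
    show ?thesis by (rule JJI[of x "6*K+6" "Q+3"]) (use xK o3 b ak Q in \<open>auto simp: algebra_simps\<close>)
  next
    case e
    define J where "J = (12*K+10-R) div 2"
    have J2: "2*J = 12*K+10-R" unfolding J_def using e(2) by presburger
    have b: "2 \<le> J \<and> J \<le> 3*((Q+2) div 2)" using CB3[OF K1 Q e(1) RK MK e(2) J2] .
    show ?thesis by (rule JJI[of x J "Q+2"]) (use xK J2 b ak Q in \<open>auto simp: algebra_simps\<close>)
  qed
qed

lemma GCOORD:
  assumes k: "1 \<le> k" and x: "int x = Q * (6*int k+5) + R" and Q: "0 \<le> Q" and R: "0 \<le> R" "R < 6*int k+5"
  shows "x \<in> Gk k \<longleftrightarrow> MemI (int k) Q R"
  using COORD[OF assms] G_JJ by simp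

lemma coords: "1 \<le> k \<Longrightarrow> \<exists>Q R. int x = Q * (6*int k+5) + R \<and> 0 \<le> Q \<and> 0 \<le> R \<and> R < 6*int k+5"
proof -
  assume k: "1 \<le> k"
  have A0: "(0::int) < 6*int k+5" by simp
  have e: "int x = int x div (6*int k+5) * (6*int k+5) + int x mod (6*int k+5)" by (rule div_mult_mod_eq[symmetric])
  show ?thesis
    by (rule exI[of _ "int x div (6*int k+5)"], rule exI[of _ "int x mod (6*int k+5)"])
       (use A0 e in \<open>auto simp: pos_imp_zdiv_nonneg_iff\<close>)
qed

lemma BIGX: "1 \<le> k \<Longrightarrow> (4*k+1) * aa k + 3 \<le> x \<Longrightarrow> x \<in> Gk k"
proof -
  assume k: "1 \<le> k" and xb: "(4*k+1) * aa k + 3 \<le> x"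
  obtain Q R where qr: "int x = Q * (6*int k+5) + R" "0 \<le> Q" "0 \<le> R" "R < 6*int k+5" using coords[OF k] by blast
  have A0: "(0::int) < 6*int k+5" by simp
  have "int ((4*k+1) * aa k + 3) \<le> int x" using xb by (simp only: of_nat_le_iff)
  moreover have "int ((4*k+1) * aa k + 3) = (4*int k+1)*(6*int k+5) + 3" by (simp add: aaI algebra_simps)
  ultimately have "(4*int k+1)*(6*int k+5) + 3 \<le> int x" by linarith
  then have "Q \<ge> 4*int k+1 \<and> (Q = 4*int k+1 \<longrightarrow> R \<ge> 3)" using BIG2[OF A0 qr(1) qr(3) qr(4), of "4*int k+1" 3] by simp
  then have "MemI (int k) Q R" unfolding MemI_def using qr by auto
  then show ?thesis using GCOORD[OF k qr] by simp
qed

lemma ivl2_core1: "(P::int) - 6*m \<le> X \<Longrightarrow> X \<le> P - 4 \<Longrightarrow> X mod 2 = (P - 6*m) mod 2 \<Longrightarrow> J = (P - X) div 2 \<Longrightarrow>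
   X + 2*J = P \<and> 2 \<le> J \<and> J \<le> 3*m"
  using dm2[of X] dm2[of "P - 6*m"] dm2[of "P - X"] by smt

lemma ivl2_core2: "X + 2*J = (P::int) \<Longrightarrow> 2 \<le> J \<Longrightarrow> J \<le> 3*m \<Longrightarrow> P - 6*m \<le> X \<and> X \<le> P - 4 \<and> X mod 2 = (P - 6*m) mod 2"
  using dm2[of X] dm2[of "P - 6*m"] by smt

lemma IikJ: "x \<in> Iik i k \<longleftrightarrow> (\<exists>j. x + 2*j = i * aa k \<and> (j = 0 \<or> (2 \<le> j \<and> j \<le> 3*(i div 2))))"
proof -
  define P where "P = int (i * aa k)"
  define m where "m = int (i div 2)"
  have "x \<in> Iik i k \<longleftrightarrow> (P - 6*m \<le> int x \<and> int x \<le> P - 4 \<and> int x mod 2 = (P - 6*m) mod 2) \<or> x = i * aa k"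
    unfolding Iik_def ivl2_def P_def m_def by auto
  also have "\<dots> \<longleftrightarrow> (\<exists>j. x + 2*j = i * aa k \<and> (j = 0 \<or> (2 \<le> j \<and> j \<le> 3*(i div 2))))"
  proof
    assume "(P - 6*m \<le> int x \<and> int x \<le> P - 4 \<and> int x mod 2 = (P - 6*m) mod 2) \<or> x = i * aa k"
    then show "\<exists>j. x + 2*j = i * aa k \<and> (j = 0 \<or> (2 \<le> j \<and> j \<le> 3*(i div 2)))"
    proof
      assume h: "P - 6*m \<le> int x \<and> int x \<le> P - 4 \<and> int x mod 2 = (P - 6*m) mod 2"
      define J where "J = (P - int x) div 2"
      have c: "int x + 2*J = P \<and> 2 \<le> J \<and> J \<le> 3*m" using ivl2_core1[of P m "int x" J] h J_def by blast
      have "int (x + 2*nat J) = int (i * aa k)" using c P_def by simp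
      then have "x + 2*nat J = i * aa k" by (simp only: of_nat_eq_iff)
      moreover have "2 \<le> nat J \<and> nat J \<le> 3*(i div 2)" using c m_def by linarith
      ultimately show ?thesis by blast
    next
      assume "x = i * aa k"
      then show ?thesis by (intro exI[of _ 0]) simp
    qed
  next
    assume "\<exists>j. x + 2*j = i * aa k \<and> (j = 0 \<or> (2 \<le> j \<and> j \<le> 3*(i div 2)))"
    then obtain j where j: "x + 2*j = i * aa k" "j = 0 \<or> (2 \<le> j \<and> j \<le> 3*(i div 2))" by blast
    show "(P - 6*m \<le> int x \<and> int x \<le> P - 4 \<and> int x mod 2 = (P - 6*m) mod 2) \<or> x = i * aa k"
    proof (cases "j = 0")
      case True then show ?thesis using j by simp
    next
      case False
      have e: "int x + 2*int j = P" unfolding P_def using j(1) by (simp flip: of_nat_mult of_nat_add)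
      have "2 \<le> int j" "int j \<le> 3*m" using j(2) False m_def by auto
      then show ?thesis using ivl2_core2[OF e] by blast
    qed
  qed
  finally show ?thesis .
qed

lemma G_H14: assumes k: "1 \<le> k" shows "Gk k = H14 k"
proof
  show "Gk k \<subseteq> H14 k"
  proof
    fix x assume "x \<in> Gk k"
    then obtain n j where nj: "x + 2*j = n * aa k" "j = 0 \<or> (2 \<le> j \<and> j \<le> 3*(n div 2))" using G_JJ unfolding JJ_def by blast
    show "x \<in> H14 k"
    proof (cases "n \<le> 4*k+2")
      case True
      then have "x \<in> Iik n k" using nj IikJ by blast
      then show ?thesis unfolding H14_def using True by auto
    next
      case False
      have "(4*k+1) * aa k + 3 \<le> x"
      proof (cases "j = 0")
        case True
        have "(4*k+3) * aa k \<le> n * aa k" using False by (intro mult_right_mono) auto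
        moreover have "(4*k+3) * aa k = (4*k+1) * aa k + 2 * aa k" by (simp add: algebra_simps)
        moreover have "aa k \<ge> 5" by (simp add: aa_def)
        ultimately show ?thesis using nj True by linarith
      next
        case jF: False
        have "int (x + 2*j) = int (n * aa k)" using nj(1) by (simp only: of_nat_eq_iff)
        then have e: "int x + 2*int j = int n * (6*int k+5)" by (simp add: aaI)
        have d: "int (n div 2) = int n div 2" by (simp add: zdiv_int)
        have "j \<le> 3*(n div 2)" using nj(2) jF by auto
        then have "int j \<le> int (3*(n div 2))" by (simp only: of_nat_le_iff)
        then have jd: "int j \<le> 3*(int n div 2)" using d by simp
        have "int x \<ge> (4*int k+1)*(6*int k+5) + 4" using BIG1[of "int k" "int n" "int j" "int x"] k False e jd by simp
        moreover have "int ((4*k+1) * aa k + 3) = (4*int k+1)*(6*int k+5) + 3" by (simp add: aaI algebra_simps)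
        ultimately have "int ((4*k+1) * aa k + 3) \<le> int x" by linarith
        then show ?thesis by (simp only: of_nat_le_iff)
      qed
      then show ?thesis unfolding H14_def by auto
    qed
  qed
next
  show "H14 k \<subseteq> Gk k"
  proof
    fix x assume "x \<in> H14 k"
    then consider (a) i where "i \<in> {0..4*k+2}" "x \<in> Iik i k" | (b) "(4*k+1) * aa k + 3 \<le> x" unfolding H14_def by auto
    then show "x \<in> Gk k"
    proof cases
      case a
      then show ?thesis using IikJ G_JJ unfolding JJ_def by blast
    next
      case b
      then show ?thesis using BIGX[OF k] by blast
    qed
  qed
qed

lemma Iik_le: "x \<in> Iik i k \<Longrightarrow> x \<le> i * aa k"
  using IikJ by fastforce

lemma P2a: assumes "i \<le> 4*k" shows "set_less (Iik i k) (Iik (i+2) k)"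
  unfolding set_less_def
proof (intro ballI)
  fix x y assume x: "x \<in> Iik i k" and y: "y \<in> Iik (i+2) k"
  obtain j where j: "y + 2*j = (i+2) * aa k" "j = 0 \<or> (2 \<le> j \<and> j \<le> 3*((i+2) div 2))" using y IikJ by blast
  have "(i+2) div 2 \<le> (4*k+2) div 2" using assms by (intro div_le_mono) simp
  moreover have "(4*k+2) div 2 = 2*k+1" by presburger
  ultimately have "j \<le> 6*k+3" using j(2) by auto
  moreover have "(i+2) * aa k = i * aa k + 2 * aa k" by (simp add: algebra_simps)
  moreover have "aa k = 6*k+5" by (simp add: aa_def)
  ultimately have "i * aa k < y" using j(1) by linarith
  then show "x < y" using Iik_le[OF x] by linarith
qed

lemma P2b: assumes "i \<le> 2*k" shows "set_less (Iik i k) (Iik (i+1) k)"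
  unfolding set_less_def
proof (intro ballI)
  fix x y assume x: "x \<in> Iik i k" and y: "y \<in> Iik (i+1) k"
  obtain j where j: "y + 2*j = (i+1) * aa k" "j = 0 \<or> (2 \<le> j \<and> j \<le> 3*((i+1) div 2))" using y IikJ by blast
  have "(i+1) div 2 \<le> (2*k+1) div 2" using assms by (intro div_le_mono) simp
  moreover have "(2*k+1) div 2 = k" by presburger
  ultimately have "j \<le> 3*k" using j(2) by auto
  moreover have "(i+1) * aa k = i * aa k + aa k" by (simp add: algebra_simps)
  moreover have "aa k = 6*k+5" by (simp add: aa_def)
  ultimately have "i * aa k < y" using j(1) by linarith
  then show "x < y" using Iik_le[OF x] by linarith
qed

lemma CC1: "1 \<le> K \<Longrightarrow> 2*K+1 \<le> I \<Longrightarrow> I \<le> 4*K+1 \<Longrightarrow> X + 2*J = P + (6*K+5) \<Longrightarrow> 2 \<le> J \<Longrightarrow> J \<le> 3*((I+1) div 2)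
   \<Longrightarrow> P - (6*K+5) + 1 \<le> X \<Longrightarrow> X \<le> (P::int) \<Longrightarrow>
   P - 6*((I - 1 - 2*K) div 2) - 1 \<le> X \<and> X \<le> P - 1 \<and> X mod 2 = (P - 6*((I - 1 - 2*K) div 2) - 1) mod 2"
  using dm2[of "I+1"] dm2[of "I - 1 - 2*K"] dm2[of X] dm2[of "P - 6*((I - 1 - 2*K) div 2) - 1"] by smt

lemma CC2: "1 \<le> K \<Longrightarrow> 2*K+1 \<le> I \<Longrightarrow> I \<le> 4*K+1 \<Longrightarrow> P - 6*((I - 1 - 2*K) div 2) - 1 \<le> X \<Longrightarrow> X \<le> (P::int) - 1 \<Longrightarrow>
   X mod 2 = (P - 6*((I - 1 - 2*K) div 2) - 1) mod 2 \<Longrightarrow> J = (P + (6*K+5) - X) div 2 \<Longrightarrow>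
   X + 2*J = P + (6*K+5) \<and> 2 \<le> J \<and> J \<le> 3*((I+1) div 2) \<and> P - (6*K+5) + 1 \<le> X"
  using dm2[of "I+1"] dm2[of "I - 1 - 2*K"] dm2[of X] dm2[of "P - 6*((I - 1 - 2*K) div 2) - 1"] dm2[of "P + (6*K+5) - X"] by smt


lemma P2c: assumes k: "1 \<le> k" and i: "2*k+1 \<le> i" "i \<le> 4*k+1"
  shows "Iik (i + 1) k \<inter> ivl (int ((i - 1) * aa k) + 1) (int (i * aa k))
              = ivl2 (int (i * aa k) - 6 * ((int i - 1 - 2 * int k) div 2) - 1) (int (i * aa k) - 1)"
proof -
  define P where "P = int (i * aa k)"
  define K where "K = int k"
  define I where "I = int i"
  have K1: "1 \<le> K" "2*K+1 \<le> I" "I \<le> 4*K+1" using k i unfolding K_def I_def by simp_all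
  have e1: "int ((i+1) * aa k) = P + (6*K+5)" unfolding P_def K_def by (simp add: algebra_simps aaI)
  have i1: "i = (i - 1) + 1" using i by simp
  have "(i - 1) * aa k + aa k = i * aa k" by (subst (2) i1) (simp add: algebra_simps)
  then have "int ((i - 1) * aa k) + int (aa k) = int (i * aa k)" by (simp only: of_nat_add[symmetric])
  then have e2: "int ((i - 1) * aa k) = P - (6*K+5)" unfolding P_def K_def aaI by linarith
  have di: "int ((i+1) div 2) = (I+1) div 2" unfolding I_def by (simp add: zdiv_int)
  show ?thesis
  proof (intro set_eqI iffI)
    fix x assume "x \<in> Iik (i + 1) k \<inter> ivl (int ((i - 1) * aa k) + 1) (int (i * aa k))"
    then have xI: "x \<in> Iik (i+1) k" and xv: "P - (6*K+5) + 1 \<le> int x" "int x \<le> P" unfolding ivl_def e2 P_def by auto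
    obtain j where j: "x + 2*j = (i+1) * aa k" "j = 0 \<or> (2 \<le> j \<and> j \<le> 3*((i+1) div 2))" using xI IikJ by blast
    have "int (x + 2*j) = int ((i+1) * aa k)" using j(1) by (simp only: of_nat_eq_iff)
    then have ej: "int x + 2*int j = P + (6*K+5)" using e1 by simp
    have jn: "j \<noteq> 0" using ej xv K1 by auto
    have "j \<le> 3*((i+1) div 2)" using j(2) jn by auto
    then have "int j \<le> int (3*((i+1) div 2))" by (simp only: of_nat_le_iff)
    then have jb: "2 \<le> int j" "int j \<le> 3*((I+1) div 2)" using di j(2) jn by auto
    show "x \<in> ivl2 (int (i * aa k) - 6 * ((int i - 1 - 2 * int k) div 2) - 1) (int (i * aa k) - 1)"
      using CC1[OF K1 ej jb xv] unfolding ivl2_def P_def K_def I_def by simp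
  next
    fix x assume "x \<in> ivl2 (int (i * aa k) - 6 * ((int i - 1 - 2 * int k) div 2) - 1) (int (i * aa k) - 1)"
    then have h: "P - 6*((I - 1 - 2*K) div 2) - 1 \<le> int x" "int x \<le> P - 1" "int x mod 2 = (P - 6*((I - 1 - 2*K) div 2) - 1) mod 2"
      unfolding ivl2_def P_def K_def I_def by auto
    define J where "J = (P + (6*K+5) - int x) div 2"
    have c: "int x + 2*J = P + (6*K+5) \<and> 2 \<le> J \<and> J \<le> 3*((I+1) div 2) \<and> P - (6*K+5) + 1 \<le> int x"
      using CC2[OF K1 h J_def] .
    have "int (x + 2*nat J) = int ((i+1) * aa k)" using c e1 by simp
    then have "x + 2*nat J = (i+1) * aa k" by (simp only: of_nat_eq_iff)
    moreover have "int (nat J) \<le> int (3*((i+1) div 2))" using c di by simp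
    then have "2 \<le> nat J \<and> nat J \<le> 3*((i+1) div 2)" using c by linarith
    ultimately have "x \<in> Iik (i+1) k" using IikJ by blast
    moreover have "x \<in> ivl (int ((i - 1) * aa k) + 1) (int (i * aa k))" unfolding ivl_def e2 using c h P_def by auto
    ultimately show "x \<in> Iik (i + 1) k \<inter> ivl (int ((i - 1) * aa k) + 1) (int (i * aa k))" by blast
  qed
qed

primrec posI :: "int \<Rightarrow> nat \<Rightarrow> int \<times> int" where
  "posI K 0 = (0,0)"
| "posI K (Suc n) = (nxQ K (fst (posI K n)) (snd (posI K n)), nxR K (fst (posI K n)) (snd (posI K n)))"

lemma finite_compl: assumes k: "1 \<le> k" shows "finite (UNIV - Gk k)"
proof -
  have "UNIV - Gk k \<subseteq> {..<(4*k+1) * aa k + 3}"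
  proof
    fix x assume "x \<in> UNIV - Gk k"
    then have "x \<notin> Gk k" by simp
    then have "\<not> ((4*k+1) * aa k + 3 \<le> x)" using BIGX[OF k, of x] by blast
    then show "x \<in> {..<(4*k+1) * aa k + 3}" by simp
  qed
  then show ?thesis using finite_subset by blast
qed

lemma infG: assumes k: "1 \<le> k" shows "infinite (Gk k)"
proof
  assume f: "finite (Gk k)"
  have "UNIV = Gk k \<union> (UNIV - Gk k)" by blast
  then have "finite (UNIV :: nat set)" using f finite_compl[OF k] by (metis finite_Un)
  then show False by simp
qed

lemma zeroG: "0 \<in> Gk k" unfolding Gk_def by (rule gen_zero)

lemma NEXT:
  assumes k: "1 \<le> k" and x: "int x = Q * (6*int k+5) + R" and Q: "0 \<le> Q" and R: "0 \<le> R" "R < 6*int k+5"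
    and M: "MemI (int k) Q R"
  shows "(LEAST y. y \<in> Gk k \<and> x < y) = nat (nxQ (int k) Q R * (6*int k+5) + nxR (int k) Q R)"
proof -
  define K where "K = int k"
  define Q' where "Q' = nxQ K Q R"
  define R' where "R' = nxR K Q R"
  have K1: "1 \<le> K" using k unfolding K_def by simp
  have MK: "MemI K Q R" using M unfolding K_def .
  have RK: "R < 6*K+5" using R unfolding K_def by simp
  have xK: "int x = Q * (6*K+5) + R" using x unfolding K_def .
  have n1: "0 \<le> R' \<and> R' < 6*K+5 \<and> ((Q' = Q \<and> R < R') \<or> (Q' = Q+1 \<and> R' = 0)) \<and> MemI K Q' R'"
    using NX1[OF K1 Q R(1) RK MK] unfolding Q'_def R'_def by blast
  have Q'0: "0 \<le> Q'" using n1 Q by auto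
  have QA: "0 \<le> Q' * (6*K+5)" using Q'0 K1 by simp
  define y0 where "y0 = nat (Q' * (6*K+5) + R')"
  have iy0: "int y0 = Q' * (6*K+5) + R'" unfolding y0_def using QA n1 by simp
  have y0G: "y0 \<in> Gk k" using GCOORD[OF k iy0[unfolded K_def] Q'0] n1 unfolding K_def by auto
  have xy0: "int x < int y0"
  proof -
    have "(Q+1)*(6*K+5) = Q*(6*K+5) + (6*K+5)" by (simp add: algebra_simps)
    then show ?thesis using n1 iy0 xK RK by auto
  qed
  have least: "y0 \<le> y" if yG: "y \<in> Gk k" and xy: "x < y" for y
  proof (rule ccontr)
    assume "\<not> y0 \<le> y"
    then have yy0: "int y < int y0" by simp
    define Ry where "Ry = int y - Q*(6*K+5)"
    have yK: "int y = Q*(6*K+5) + Ry" unfolding Ry_def by simp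
    have RRy: "R < Ry" using xy xK yK by simp
    have e: "(Q+1)*(6*K+5) = Q*(6*K+5) + (6*K+5)" by (simp add: algebra_simps)
    have RyA: "Ry < 6*K+5" and RyR': "Q' = Q \<Longrightarrow> Ry < R'" using n1 iy0 yK yy0 e by auto
    have "MemI K Q Ry" using GCOORD[OF k yK[unfolded K_def] Q] yG RRy R RyA unfolding K_def by auto
    moreover have "\<not> MemI K Q Ry" using NX2[OF K1 Q R(1) RK MK Q'_def R'_def RRy RyA RyR'] .
    ultimately show False by blast
  qed
  have "(LEAST y. y \<in> Gk k \<and> x < y) = y0"
    by (rule Least_equality) (use y0G xy0 least in auto)
  then show ?thesis unfolding y0_def Q'_def R'_def K_def .
qed

lemma modSuc3: "int (Suc n mod 3) = (if int (n mod 3) = 2 then 0 else int (n mod 3) + 1)"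
proof -
  have "n mod 3 = 0 \<or> n mod 3 = 1 \<or> n mod 3 = 2" by arith
  then show ?thesis by (auto simp: mod_Suc)
qed

lemma INV:
  assumes k: "1 \<le> k"
  shows "0 \<le> fst (posI (int k) n) \<and> 0 \<le> snd (posI (int k) n) \<and> snd (posI (int k) n) < 6*int k+5
    \<and> MemI (int k) (fst (posI (int k) n)) (snd (posI (int k) n))
    \<and> sigI (int k) (fst (posI (int k) n)) (snd (posI (int k) n)) = int (n mod 3)
    \<and> int (enumerate (Gk k) n) = fst (posI (int k) n) * (6*int k+5) + snd (posI (int k) n)"
proof (induction n)
  case 0
  have "enumerate (Gk k) 0 = 0" unfolding enumerate_0 by (rule Least_equality) (use zeroG in auto)
  then show ?case by (simp add: MemI_def sigI_def)
next
  case (Suc n)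
  define Q where "Q = fst (posI (int k) n)"
  define R where "R = snd (posI (int k) n)"
  have IH: "0 \<le> Q" "0 \<le> R" "R < 6*int k+5" "MemI (int k) Q R" "sigI (int k) Q R = int (n mod 3)"
     "int (enumerate (Gk k) n) = Q * (6*int k+5) + R" using Suc.IH unfolding Q_def R_def by auto
  have K1: "1 \<le> int k" using k by simp
  have RK: "R < 6*int k + 5" using IH by simp
  have n1: "0 \<le> nxR (int k) Q R \<and> nxR (int k) Q R < 6*int k+5 \<and> ((nxQ (int k) Q R = Q \<and> R < nxR (int k) Q R) \<or> (nxQ (int k) Q R = Q+1 \<and> nxR (int k) Q R = 0)) \<and> MemI (int k) (nxQ (int k) Q R) (nxR (int k) Q R)"
    using NX1[OF K1 IH(1) IH(2) RK IH(4) refl refl] .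
  have s: "sigI (int k) (nxQ (int k) Q R) (nxR (int k) Q R) = int (Suc n mod 3)"
    using NX3[OF K1 IH(1) IH(2) RK IH(4)] IH(5) modSuc3[of n] by simp
  have en: "enumerate (Gk k) (Suc n) = (LEAST s. s \<in> Gk k \<and> enumerate (Gk k) n < s)"
    by (rule enumerate_Suc''[OF infG[OF k]])
  have "enumerate (Gk k) (Suc n) = nat (nxQ (int k) Q R * (6*int k+5) + nxR (int k) Q R)"
    unfolding en using NEXT[OF k IH(6) IH(1) IH(2) RK IH(4)] .
  moreover have "0 \<le> nxQ (int k) Q R * (6*int k+5) + nxR (int k) Q R" using n1 IH(1) by auto
  ultimately have "int (enumerate (Gk k) (Suc n)) = nxQ (int k) Q R * (6*int k+5) + nxR (int k) Q R" by simp
  then show ?case using n1 s IH(1) by (auto simp: Q_def R_def)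
qed

lemma DXL: "1 \<le> K \<Longrightarrow> 0 \<le> Q \<Longrightarrow> 0 \<le> R \<Longrightarrow> R < 6*K+5 \<Longrightarrow> MemI K Q R \<Longrightarrow>
  nxQ K Q R * (6*K+5) + nxR K Q R = Q*(6*K+5) + R + dX K Q R"
proof -
  assume a: "1 \<le> K" "0 \<le> Q" "0 \<le> R" "R < 6*K+5" "MemI K Q R"
  have n1: "((nxQ K Q R = Q \<and> R < nxR K Q R) \<or> (nxQ K Q R = Q+1 \<and> nxR K Q R = 0))"
    using NX1[OF a refl refl] by blast
  have e: "(Q+1)*(6*K+5) = Q*(6*K+5) + (6*K+5)" by (simp add: algebra_simps)
  show ?thesis using n1 e by (auto simp: dX_def)
qed

lemma R3: "(d1 = 1 \<and> d2 = 1) \<or> (d1 = 2 \<and> d2 = 2) \<or> (d1 mod 3 = 2 \<and> d2 = 2) \<Longrightarrow>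
   (X::int) mod 3 \<noteq> (X+d1) mod 3 \<and> X mod 3 \<noteq> (X+d1+d2) mod 3 \<and> (X+d1) mod 3 \<noteq> (X+d1+d2) mod 3"
proof -
  assume d: "(d1 = 1 \<and> d2 = 1) \<or> (d1 = 2 \<and> d2 = 2) \<or> (d1 mod 3 = 2 \<and> d2 = 2)"
  have k1: "\<And>Y::int. Y mod 3 \<noteq> (Y+1) mod 3" by presburger
  have k2: "\<And>Y::int. Y mod 3 \<noteq> (Y+2) mod 3" by presburger
  have k4: "\<And>Y::int. (Y+4) mod 3 = (Y+1) mod 3" by presburger
  have e1: "(X + d1) mod 3 = (X + 2) mod 3" if "d1 mod 3 = 2"
    using that by (metis mod_add_right_eq)
  have e2: "(X + d1 + 2) mod 3 = (X + 1) mod 3" if "d1 mod 3 = 2"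
  proof -
    have "(X + d1 + 2) mod 3 = (X + 2 + d1 mod 3) mod 3" by (metis add.commute add.left_commute mod_add_right_eq)
    also have "\<dots> = (X+4) mod 3" using that by (simp add: add.commute)
    finally show ?thesis using k4 by simp
  qed
  show ?thesis
  proof (cases "d1 = 1 \<and> d2 = 1")
    case True then show ?thesis using k1[of X] k2[of X] k1[of "X+1"] by (simp add: add.assoc)
  next
    case F1: False
    show ?thesis
    proof (cases "d1 = 2 \<and> d2 = 2")
      case True
      then show ?thesis using k2[of X] k1[of X] k4[of X] k2[of "X+2"] by (simp add: add.assoc)
    next
      case False
      then have h: "d1 mod 3 = 2" "d2 = 2" using d F1 by auto
      show ?thesis using e1[OF h(1)] e2[OF h(1)] h(2) k2[of X] k1[of X] k2[of "X+2"] k4[of X] by (simp add: add.assoc)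
    qed
  qed
qed

lemma BLOCK:
  assumes k: "1 \<le> k"
  shows "enumerate (Gk k) (m*3+1) mod 3 \<noteq> enumerate (Gk k) (m*3+2) mod 3
       \<and> enumerate (Gk k) (m*3+1) mod 3 \<noteq> enumerate (Gk k) (m*3+3) mod 3
       \<and> enumerate (Gk k) (m*3+2) mod 3 \<noteq> enumerate (Gk k) (m*3+3) mod 3"
proof -
  define K where "K = int k"
  have K1: "1 \<le> K" using k unfolding K_def by simp
  define Q where "Q = fst (posI K (m*3+1))"
  define R where "R = snd (posI K (m*3+1))"
  define Q1 where "Q1 = nxQ K Q R"
  define R1 where "R1 = nxR K Q R"
  define Q2 where "Q2 = nxQ K Q1 R1"
  define R2 where "R2 = nxR K Q1 R1"
  have s2: "m*3+2 = Suc (m*3+1)" by simp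
  have s3: "m*3+3 = Suc (m*3+2)" by simp
  have p2: "posI K (m*3+2) = (Q1, R1)" unfolding Q1_def R1_def Q_def R_def by (simp only: s2 posI.simps(2))
  have p3: "posI K (m*3+3) = (Q2, R2)"
  proof -
    have "posI K (m*3+3) = (nxQ K (fst (posI K (m*3+2))) (snd (posI K (m*3+2))), nxR K (fst (posI K (m*3+2))) (snd (posI K (m*3+2))))"
      by (simp only: s3 posI.simps(2))
    then show ?thesis unfolding p2 Q2_def R2_def by simp
  qed
  have I0: "0 \<le> Q" "0 \<le> R" "R < 6*K+5" "MemI K Q R" "sigI K Q R = int ((m*3+1) mod 3)"
     "int (enumerate (Gk k) (m*3+1)) = Q * (6*K+5) + R" using INV[OF k, of "m*3+1"] unfolding Q_def R_def K_def by auto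
  have I1: "0 \<le> Q1" "0 \<le> R1" "R1 < 6*K+5" "MemI K Q1 R1"
     "int (enumerate (Gk k) (m*3+2)) = Q1 * (6*K+5) + R1" using INV[OF k, of "m*3+2"] p2 unfolding K_def by auto
  have I2: "int (enumerate (Gk k) (m*3+3)) = Q2 * (6*K+5) + R2" using INV[OF k, of "m*3+3"] p3 unfolding K_def by auto
  have m1: "(m*3+1) mod 3 = 1" by presburger
  have s1: "sigI K Q R = 1" using I0(5) unfolding m1 by simp
  have d: "(dX K Q R = 1 \<and> dX K Q1 R1 = 1) \<or> (dX K Q R = 2 \<and> dX K Q1 R1 = 2) \<or> (dX K Q R mod 3 = 2 \<and> dX K Q1 R1 = 2)"
    using DSTEP[OF K1 I0(1) I0(2) I0(3) I0(4) s1] unfolding Q1_def R1_def by simp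
  have x1: "Q1 * (6*K+5) + R1 = Q*(6*K+5) + R + dX K Q R" using DXL[OF K1 I0(1-4)] unfolding Q1_def R1_def .
  have x2: "Q2 * (6*K+5) + R2 = Q1*(6*K+5) + R1 + dX K Q1 R1" using DXL[OF K1 I1(1-4)] unfolding Q2_def R2_def .
  define X where "X = Q*(6*K+5) + R"
  have r: "X mod 3 \<noteq> (X + dX K Q R) mod 3 \<and> X mod 3 \<noteq> (X + dX K Q R + dX K Q1 R1) mod 3 \<and> (X + dX K Q R) mod 3 \<noteq> (X + dX K Q R + dX K Q1 R1) mod 3"
    using R3[OF d] .
  have e1: "int (enumerate (Gk k) (m*3+1) mod 3) = X mod 3" using I0(6) unfolding X_def by (simp add: zmod_int)
  have e2: "int (enumerate (Gk k) (m*3+2) mod 3) = (X + dX K Q R) mod 3" using I1(5) x1 unfolding X_def by (simp add: zmod_int)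
  have e3: "int (enumerate (Gk k) (m*3+3) mod 3) = (X + dX K Q R + dX K Q1 R1) mod 3" using I2 x2 x1 unfolding X_def by (simp add: zmod_int)
  show ?thesis using r e1 e2 e3 by (metis of_nat_eq_iff)
qed

lemma BIJ3: "(a::nat) < 3 \<Longrightarrow> b < 3 \<Longrightarrow> c < 3 \<Longrightarrow> a \<noteq> b \<Longrightarrow> a \<noteq> c \<Longrightarrow> b \<noteq> c \<Longrightarrow>
  (f::nat\<Rightarrow>nat) 1 = a \<Longrightarrow> f 2 = b \<Longrightarrow> f 3 = c \<Longrightarrow> bij_betw f {1..3} {0..<3}"
proof -
  assume h: "a < 3" "b < 3" "c < 3" "a \<noteq> b" "a \<noteq> c" "b \<noteq> c" "f 1 = a" "f 2 = b" "f 3 = c"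
  have s: "{1..3::nat} = {1,2,3}" by auto
  have inj: "inj_on f {1,2,3}" using h(4-9) by simp
  have im: "f ` {1,2,3} = {a,b,c}" using h(7-9) by simp
  have sub: "{a,b,c} \<subseteq> {0..<3}" using h(1-3) by auto
  have c3: "card {a,b,c} = card {0..<(3::nat)}" using h(4-6) by simp
  have e: "{a,b,c} = {0..<3}" by (rule card_subset_eq[OF _ sub c3]) simp
  show ?thesis unfolding s bij_betw_def using inj im e by simp
qed

lemma PERM: assumes k: "1 \<le> k" shows "perm_numerical_semigroup 3 (Gk k)"
proof -
  define K where "K = int k"
  have K1: "1 \<le> K" using k unfolding K_def by simp
  have cl: "\<forall>x\<in>Gk k. \<forall>y\<in>Gk k. x + y \<in> Gk k" unfolding Gk_def by (intro ballI) (rule gen_add)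
  have ns: "numerical_semigroup (Gk k)"
    unfolding numerical_semigroup_def using zeroG cl finite_compl[OF k] by blast
  have p1: "posI K (Suc 0) = (1,0)" by (simp add: nxQ_def nxR_def)
  have p2: "posI K (Suc (Suc 0)) = (1, 6*K-1)" using p1 K1 by (simp add: nxQ_def nxR_def)
  have p3: "posI K (Suc (Suc (Suc 0))) = (1, 6*K+1)" using p2 K1 by (simp add: nxQ_def nxR_def)
  have "int (enumerate (Gk k) (Suc 0)) = 6*K+5" using INV[OF k, of "Suc 0"] p1 unfolding K_def by simp
  then have "int (enumerate (Gk k) (Suc 0)) = int (aa k)" unfolding K_def by (simp add: aaI)
  then have e1: "enumerate (Gk k) 1 = aa k" by (simp only: of_nat_eq_iff One_nat_def)
  have "int (enumerate (Gk k) (Suc (Suc 0))) = 12*K+4" using INV[OF k, of "Suc (Suc 0)"] p2 unfolding K_def by simp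
  moreover have "int (2 * aa k - 6) = 12*K+4" unfolding K_def by (simp add: aa_def)
  ultimately have e2: "enumerate (Gk k) 2 = 2 * aa k - 6" by (simp add: numeral_2_eq_2)
  have "int (enumerate (Gk k) (Suc (Suc (Suc 0)))) = 12*K+6" using INV[OF k, of "Suc (Suc (Suc 0))"] p3 unfolding K_def by simp
  moreover have "int (2 * aa k - 4) = 12*K+6" unfolding K_def by (simp add: aa_def)
  ultimately have e3: "enumerate (Gk k) 3 = 2 * aa k - 4" by (simp add: numeral_3_eq_3)
  have s: "{1..3::nat} = {1,2,3}" by auto
  have gen: "Gk k = gen (enumerate (Gk k) ` {1..3})" unfolding s using e1 e2 e3 by (simp add: Gk_def)
  have bij: "\<forall>m. bij_betw (\<lambda>j. enumerate (Gk k) (m * 3 + j) mod 3) {1..3} {0..<3}"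
  proof
    fix m
    show "bij_betw (\<lambda>j. enumerate (Gk k) (m * 3 + j) mod 3) {1..3} {0..<3}"
      using BLOCK[OF k, of m]
      by (intro BIJ3[of "enumerate (Gk k) (m*3+1) mod 3" "enumerate (Gk k) (m*3+2) mod 3" "enumerate (Gk k) (m*3+3) mod 3"]) auto
  qed
  show ?thesis unfolding perm_numerical_semigroup_def using ns gen bij by blast
qed

theorem lemma4p14:
  fixes k :: nat
  assumes "k \<ge> 1"
  shows "(\<forall>x. x \<in> Gk k \<longleftrightarrow>
            (\<exists>q r s :: nat. r \<le> q \<and>
               int x = int ((s + 2 * q) * aa k) - 6 * int q + 2 * int r))
       \<and> (\<forall>i\<in>{0..4*k}. set_less (Iik i k) (Iik (i + 2) k))
       \<and> (\<forall>i\<in>{0..2*k}. set_less (Iik i k) (Iik (i + 1) k))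
       \<and> (\<forall>i\<in>{2*k+1..4*k+1}.
            Iik (i + 1) k \<inter> ivl (int ((i - 1) * aa k) + 1) (int (i * aa k))
              = ivl2 (int (i * aa k) - 6 * ((int i - 1 - 2 * int k) div 2) - 1)
                     (int (i * aa k) - 1))
       \<and> Gk k = H14 k
       \<and> perm_numerical_semigroup 3 (H14 k)"
proof -
  have k: "1 \<le> k" using assms by simp
  show ?thesis
  proof (intro conjI ballI allI)
    fix x show "x \<in> Gk k \<longleftrightarrow> (\<exists>q r s :: nat. r \<le> q \<and> int x = int ((s + 2 * q) * aa k) - 6 * int q + 2 * int r)"
      using G_JJ part1 by simp
  next
    fix i assume "i \<in> {0..4*k}" then show "set_less (Iik i k) (Iik (i + 2) k)" by (intro P2a) simp
  next
    fix i assume "i \<in> {0..2*k}" then show "set_less (Iik i k) (Iik (i + 1) k)" by (intro P2b) simp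
  next
    fix i assume "i \<in> {2*k+1..4*k+1}"
    then show "Iik (i + 1) k \<inter> ivl (int ((i - 1) * aa k) + 1) (int (i * aa k))
              = ivl2 (int (i * aa k) - 6 * ((int i - 1 - 2 * int k) div 2) - 1) (int (i * aa k) - 1)"
      using P2c[OF k] by simp
  next
    show "Gk k = H14 k" using G_H14[OF k] .
  next
    show "perm_numerical_semigroup 3 (H14 k)" using PERM[OF k] G_H14[OF k] by simp
  qed
qed


end
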